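(* Consider IMR(1) (order $p=1$) as described in the context, where exactly the first $\ell$ data points are labeled, i.e. $L=\{1,\dots,\ell\}$. If $$\left|\sum_{t=1}^{\ell-1}\left(y^{(0)}_t-x_t\right)\left(y^{(0)}_{t+1}-x_{t+1}\right)\right|<\sum_{t=1}^{\ell-1}\left(y^{(0)}_t-x_t\right)^2,$$ then $|\phi_1^{(k)}|<1$ for all iterations $k$ with $0\le k\le n-\ell$.
   Context: Let $n\ge 1$ and let $x=(x_1,\dots,x_n)\in\mathbb{R}^n$ be an observed time series. A set $L\subseteq\{1,\dots,n\}$ of labeled indices is given, together with labeled values $y^{(0)}_t$ for $t\in L$; for $t\notin L$ put $y^{(0)}_t=x_t$. Fix a threshold $\tau\ge 0$. IMR(1) produces sequences $y^{(k)}\in\mathbb{R}^n$, $k=0,1,2,\dots$; write $z^{(k)}_t=y^{(k)}_t-x_t$. In iteration $k$: (S1) $\phi^{(k)}_1=\dfrac{\sum_{t=1}^{n-1}z^{(k)}_tz^{(k)}_{t+1}}{\sum_{t=1}^{n-1}(z^{(k)}_t)^2}$ (ordinary least squares). (S2) For each $t\in\{2,\dots,n\}\setminus L$ compute $\hat y^{(k)}_t=\phi^{(k)}_1z^{(k)}_{t-1}+x_t$; $t$ is a candidate only if $|\hat y^{(k)}_t-y^{(k)}_t|>\tau$. (S3) If candidates exist, choose a candidate $t^*$ minimizing $|\hat y^{(k)}_t-x_t|$ (ties broken arbitrarily), set $y^{(k+1)}_{t^*}=\hat y^{(k)}_{t^*}$ and keep all other values; if no candidate exists, the algorithm terminates and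 $y^{(k+1)}=y^{(k)}$ from then on. Labeled values are never modified. *)

theory Defs
  imports Complex_Main
begin

text \<open>Series are functions nat => real; only indices 1..n are meaningful.\<close>

definition imr_phi :: "nat \<Rightarrow> (nat \<Rightarrow> real) \<Rightarrow> real" where
  "imr_phi n z = (\<Sum>t=1..n-1. z t * z (t+1)) / (\<Sum>t=1..n-1. (z t)^2)"

definition imr_z :: "(nat \<Rightarrow> real) \<Rightarrow> (nat \<Rightarrow> real) \<Rightarrow> nat \<Rightarrow> real" where
  "imr_z x y t = y t - x t"

definition imr_yhat :: "nat \<Rightarrow> (nat \<Rightarrow> real) \<Rightarrow> (nat \<Rightarrow> real) \<Rightarrow> nat \<Rightarrow> real" where
  "imr_yhat n x y t = imr_phi n (imr_z x y) * imr_z x y (t-1) + x t"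

definition imr_cand :: "nat \<Rightarrow> nat set \<Rightarrow> real \<Rightarrow> (nat \<Rightarrow> real) \<Rightarrow> (nat \<Rightarrow> real) \<Rightarrow> nat \<Rightarrow> bool" where
  "imr_cand n L \<tau> x y t \<longleftrightarrow> t \<in> {2..n} - L \<and> \<bar>imr_yhat n x y t - y t\<bar> > \<tau>"

text \<open>One IMR(1) iteration (S1)-(S3), with arbitrary tie-breaking: y' is a possible successor of y.\<close>
definition imr_step :: "nat \<Rightarrow> nat set \<Rightarrow> real \<Rightarrow> (nat \<Rightarrow> real) \<Rightarrow> (nat \<Rightarrow> real) \<Rightarrow> (nat \<Rightarrow> real) \<Rightarrow> bool" where
  "imr_step n L \<tau> x y y' \<longleftrightarrow>
     (if \<exists>t. imr_cand n L \<tau> x y t then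
        (\<exists>s. imr_cand n L \<tau> x y s \<and>
             (\<forall>t. imr_cand n L \<tau> x y t \<longrightarrow>
                  \<bar>imr_yhat n x y s - x s\<bar> \<le> \<bar>imr_yhat n x y t - x t\<bar>) \<and>
             y' = y(s := imr_yhat n x y s))
      else y' = y)"

end

theory Submission
  imports Defs
begin

lemma tail_bound:
  fixes z :: "nat \<Rightarrow> real"
  assumes "l \<le> n" "(z n)^2 \<le> (z l)^2"
  shows "(\<Sum>t=l..<n. \<bar>z t * z (t+1)\<bar>) \<le> (\<Sum>t=l..<n. (z t)^2)"
proof -
  have tel: "(\<Sum>t=l..<n. (z (Suc t))^2 - (z t)^2) = (z n)^2 - (z l)^2"
    using sum_Suc_diff'[OF assms(1), of "\<lambda>t. (z t)^2"] by simp
  have "(\<Sum>t=l..<n. \<bar>z t * z (t+1)\<bar>) \<le> (\<Sum>t=l..<n. ((z t)^2 + (z (t+1))^2)/2)"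
  proof (rule sum_mono)
    fix t
    have "0 \<le> (\<bar>z t\<bar> - \<bar>z (t+1)\<bar>)^2" by simp
    then show "\<bar>z t * z (t+1)\<bar> \<le> ((z t)^2 + (z (t+1))^2)/2"
      by (simp add: power2_eq_square abs_mult algebra_simps)
  qed
  also have "\<dots> = (\<Sum>t=l..<n. (z t)^2) + (\<Sum>t=l..<n. (z (Suc t))^2 - (z t)^2)/2"
  proof -
    have "(\<Sum>t=l..<n. ((z t)^2 + (z (t+1))^2)/2) = (\<Sum>t=l..<n. (z t)^2 + ((z (Suc t))^2 - (z t)^2)/2)"
      by (rule sum.cong) (auto simp: field_simps)
    also have "\<dots> = (\<Sum>t=l..<n. (z t)^2) + (\<Sum>t=l..<n. ((z (Suc t))^2 - (z t)^2)/2)"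
      by (rule sum.distrib)
    also have "\<dots> = (\<Sum>t=l..<n. (z t)^2) + (\<Sum>t=l..<n. (z (Suc t))^2 - (z t)^2)/2"
      by (simp only: sum_divide_distrib)
    finally show ?thesis .
  qed
  also have "\<dots> \<le> (\<Sum>t=l..<n. (z t)^2)" using tel assms(2) by simp
  finally show ?thesis .
qed

lemma phi_bound:
  fixes z :: "nat \<Rightarrow> real"
  assumes "l \<le> n" "(z n)^2 \<le> (z l)^2"
    and h: "\<bar>\<Sum>t=1..l-1. z t * z (t+1)\<bar> < (\<Sum>t=1..l-1. (z t)^2)"
  shows "\<bar>imr_phi n z\<bar> < 1"
proof -
  have l2: "l \<ge> 2"
  proof (rule ccontr)
    assume "\<not> l \<ge> 2"
    then have "{1..l-1} = {}" by auto
    then show False using h by simp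
  qed
  have split: "{1..n-1} = {1..l-1} \<union> {l..<n}" using l2 assms(1) by auto
  have disj: "{1..l-1} \<inter> {l..<n} = {}" by auto
  define N0 where "N0 = (\<Sum>t=1..l-1. z t * z (t+1))"
  define S0 where "S0 = (\<Sum>t=1..l-1. (z t)^2)"
  define T where "T = (\<Sum>t=l..<n. z t * z (t+1))"
  define U where "U = (\<Sum>t=l..<n. (z t)^2)"
  have N: "(\<Sum>t=1..n-1. z t * z (t+1)) = N0 + T"
    unfolding N0_def T_def split by (rule sum.union_disjoint) (auto)
  have S: "(\<Sum>t=1..n-1. (z t)^2) = S0 + U"
    unfolding S0_def U_def split by (rule sum.union_disjoint) (auto)
  have "\<bar>T\<bar> \<le> (\<Sum>t=l..<n. \<bar>z t * z (t+1)\<bar>)" unfolding T_def by (rule sum_abs)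
  also have "\<dots> \<le> U" unfolding U_def by (rule tail_bound[OF assms(1,2)])
  finally have TU: "\<bar>T\<bar> \<le> U" .
  have h': "\<bar>N0\<bar> < S0" using h N0_def S0_def by simp
  have "\<bar>N0 + T\<bar> < S0 + U" using TU h' by linarith
  moreover have "S0 + U > 0" using TU h' by linarith
  ultimately have "\<bar>(N0 + T) / (S0 + U)\<bar> < 1"
    by (simp add: abs_divide divide_less_eq)
  then show ?thesis unfolding imr_phi_def N S .
qed

theorem lemma2:
  fixes n l :: nat and x :: "nat \<Rightarrow> real" and \<tau> :: real
    and Y :: "nat \<Rightarrow> nat \<Rightarrow> real"
  assumes "n \<ge> 1" and "l \<le> n" and "\<tau> \<ge> 0"
    and "\<And>t. t \<notin> {1..l} \<Longrightarrow> Y 0 t = x t"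
    and "\<And>k. imr_step n {1..l} \<tau> x (Y k) (Y (Suc k))"
    and "\<bar>\<Sum>t=1..l-1. (Y 0 t - x t) * (Y 0 (t+1) - x (t+1))\<bar> < (\<Sum>t=1..l-1. (Y 0 t - x t)^2)"
  shows "\<forall>k. k \<le> n - l \<longrightarrow> \<bar>imr_phi n (imr_z x (Y k))\<bar> < 1"
proof -
  define Inv where "Inv k \<longleftrightarrow> (\<forall>t>l+k. imr_z x (Y k) t = 0)
      \<and> \<bar>imr_z x (Y k) (l+k)\<bar> \<le> \<bar>imr_z x (Y k) l\<bar>
      \<and> (\<forall>t\<in>{1..l}. Y k t = Y 0 t)" for k
  have hyp0: "\<bar>\<Sum>t=1..l-1. imr_z x (Y k) t * imr_z x (Y k) (t+1)\<bar> < (\<Sum>t=1..l-1. (imr_z x (Y k) t)^2)"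
    if "\<forall>t\<in>{1..l}. Y k t = Y 0 t" for k
  proof -
    have e1: "(\<Sum>t=1..l-1. imr_z x (Y k) t * imr_z x (Y k) (t+1)) = (\<Sum>t=1..l-1. (Y 0 t - x t) * (Y 0 (t+1) - x (t+1)))"
      by (rule sum.cong) (use that in \<open>auto simp: imr_z_def\<close>)
    have e2: "(\<Sum>t=1..l-1. (imr_z x (Y k) t)^2) = (\<Sum>t=1..l-1. (Y 0 t - x t)^2)"
      by (rule sum.cong) (use that in \<open>auto simp: imr_z_def\<close>)
    show ?thesis unfolding e1 e2 by (rule assms(6))
  qed
  have phiInv: "\<bar>imr_phi n (imr_z x (Y k))\<bar> < 1" if "Inv k" "k \<le> n - l" for k
  proof (rule phi_bound[of l n "imr_z x (Y k)", OF assms(2)])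
    have "\<forall>t\<in>{1..l}. Y k t = Y 0 t" using that unfolding Inv_def by blast
    then show "\<bar>\<Sum>t=1..l-1. imr_z x (Y k) t * imr_z x (Y k) (t+1)\<bar> < (\<Sum>t=1..l-1. (imr_z x (Y k) t)^2)"
      by (rule hyp0)
    show "(imr_z x (Y k) n)^2 \<le> (imr_z x (Y k) l)^2"
    proof (cases "n > l + k")
      case True then show ?thesis using that unfolding Inv_def by simp
    next
      case False then have "n = l + k" using that assms(2) by simp
      then show ?thesis using that unfolding Inv_def by (simp add: abs_le_square_iff)
    qed
  qed
  have "Inv k" if "k \<le> n - l" for k
    using that
  proof (induction k)
    case 0
    have "\<forall>t>l + 0. imr_z x (Y 0) t = 0"
    proof (intro allI impI)
      fix t assume "t > l + 0"
      then have "t \<notin> {1..l}" by simp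
      then show "imr_z x (Y 0) t = 0" using assms(4)[of t] by (simp add: imr_z_def)
    qed
    then show ?case unfolding Inv_def by simp
  next
    case (Suc k)
    let ?z = "imr_z x (Y k)" and ?z' = "imr_z x (Y (Suc k))"
    have I: "Inv k" using Suc by simp
    have ph: "\<bar>imr_phi n ?z\<bar> < 1" using phiInv[OF I] Suc.prems by simp
    have zero: "\<And>t. t > l + k \<Longrightarrow> ?z t = 0" using I unfolding Inv_def by blast
    have zl: "\<bar>?z (l+k)\<bar> \<le> \<bar>?z l\<bar>" using I unfolding Inv_def by blast
    have lab: "\<forall>t\<in>{1..l}. Y k t = Y 0 t" using I unfolding Inv_def by blast
    show ?case
    proof (cases "\<exists>t. imr_cand n {1..l} \<tau> x (Y k) t")
      case False
      then have "Y (Suc k) = Y k" using assms(5)[of k] unfolding imr_step_def by simp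
      then show ?thesis unfolding Inv_def using zero lab by auto
    next
      case True
      then obtain s where cs: "imr_cand n {1..l} \<tau> x (Y k) s"
        and Ys: "Y (Suc k) = (Y k)(s := imr_yhat n x (Y k) s)"
        using assms(5)[of k] unfolding imr_step_def by auto
      have sr: "s \<in> {2..n}" "s \<notin> {1..l}" and gt: "\<bar>imr_yhat n x (Y k) s - Y k s\<bar> > \<tau>"
        using cs unfolding imr_cand_def by auto
      have zs': "?z' s = imr_phi n ?z * ?z (s-1)"
        using Ys by (simp add: imr_z_def imr_yhat_def)
      have zt': "\<And>t. t \<noteq> s \<Longrightarrow> ?z' t = ?z t" using Ys by (simp add: imr_z_def)
      have sle: "s \<le> l + k + 1"
      proof (rule ccontr)
        assume "\<not> ?thesis"
        then have "?z s = 0" "?z (s-1) = 0" using zero by auto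
        then have "imr_yhat n x (Y k) s - Y k s = 0" by (simp add: imr_yhat_def imr_z_def)
        then show False using gt assms(3) by simp
      qed
      have A: "\<forall>t>l + Suc k. ?z' t = 0" using zt' zero sle by auto
      have sl: "s > l" using sr by auto
      have B: "\<bar>?z' (l + Suc k)\<bar> \<le> \<bar>?z' l\<bar>"
      proof (cases "s = l + k + 1")
        case True
        have "\<bar>?z' (l + Suc k)\<bar> = \<bar>imr_phi n ?z\<bar> * \<bar>?z (l+k)\<bar>"
          using zs' True by (simp add: abs_mult)
        also have "\<dots> \<le> \<bar>?z (l+k)\<bar>" using ph by (simp add: mult_left_le_one_le)
        also have "\<dots> \<le> \<bar>?z' l\<bar>" using zl zt' sl by simp
        finally show ?thesis .
      next
        case False
        then show ?thesis using zt' zero by simp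
      qed
      have C: "\<forall>t\<in>{1..l}. Y (Suc k) t = Y 0 t" using lab Ys sr by auto
      show ?thesis unfolding Inv_def using A B C by blast
    qed
  qed
  then show ?thesis using phiInv by blast
qed

end
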